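(* Let $h_{SR_k}, h_{R_kD}, h_{SP}, h_{R_kP}, h_{R_kR_k} \in \mathbb{C}$, $\sigma_D > 0$, $\sigma_{R_k} > 0$, $\zeta \ge 0$, and set $\hat{\zeta} = |h_{R_kR_k}|^2\zeta$, assumed $>0$. Let $\bar{\mathcal{I}}_P > 0$, $P_S^{\max} > 0$, $P_{R_k}^{\max} > 0$. For $p_S, p_{R_k} \ge 0$ define $$G_k = \left[p_S^2|h_{SR_k}|^2 + \zeta p_{R_k}^2|h_{R_kR_k}|^2 + \sigma_{R_k}^2\right]^{-1/2},$$ $$A = h_{SP}\,p_S + h_{R_kP}\sqrt{\zeta}\,p_{R_k},\qquad B = \left(h_{SR_k}p_S + h_{R_kR_k}\sqrt{\zeta}\,p_{R_k} + \frac{\sigma_{R_k}}{\sqrt 2}(1+j)\right)G_k\,h_{R_kP}\,p_{R_k},$$ and $\mathcal{I}^{\mathrm{coh}}_k = (|A| - |B|)^2$. Consider the optimization problem (Problem 4) $$\max_{p_S, p_{R_k}} \ \breve{\mathcal{C}}_k(p_S, p_{R_k}) = \frac{\frac{p_{R_k}^2|h_{R_kD}|^2}{\sigma_D^2}\cdot\frac{p_S^2|h_{SR_k}|^2}{\hat{\zeta}p_{R_k}^2}}{1 + \frac{p_{R_k}^2|h_{R_kD}|^2}{\sigma_D^2} + \frac{p_S^2|h_{SR_k}|^2}{\hat{\zeta}p_{R_k}^2}}$$ subject to $$\mathcal{I}^{\mathrm{coh}}_k \le \bar{\mathcal{I}}_P,\quad 0 \le p_S \le \sqrt{P_S^{\max}},\quad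 0 \le p_{R_k} \le \sqrt{P_{R_k}^{\max}}.$$ Then Problem 4 is not a convex optimization problem in the joint variable $(p_S, p_{R_k})$.
   Context: $j$ is the imaginary unit. A maximization problem is called a convex optimization problem if its objective is a concave function over a convex feasible set. The objective is defined for $p_{R_k} > 0$. The variables $p_S = \sqrt{P_S}$, $p_{R_k} = \sqrt{P_{R_k}}$ are square roots of the transmit powers, and $\mathcal{I}^{\mathrm{coh}}_k$ is the interference at the primary receiver in the coherent scenario after optimal phase regulation at the relay. *)

theory Defs
  imports "HOL-Analysis.Analysis"
begin

definition G_k :: "complex \<Rightarrow> complex \<Rightarrow> real \<Rightarrow> real \<Rightarrow> real \<Rightarrow> real \<Rightarrow> real" where
  "G_k hSR hRR \<zeta> \<sigma>R pS pR =
     1 / sqrt (pS^2 * (cmod hSR)^2 + \<zeta> * pR^2 * (cmod hRR)^2 + \<sigma>R^2)"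

definition I_coh :: "complex \<Rightarrow> complex \<Rightarrow> complex \<Rightarrow> complex \<Rightarrow> real \<Rightarrow> real \<Rightarrow> real \<Rightarrow> real \<Rightarrow> real" where
  "I_coh hSR hRR hSP hRP \<zeta> \<sigma>R pS pR =
     (let A = hSP * complex_of_real pS + hRP * complex_of_real (sqrt \<zeta>) * complex_of_real pR;
          B = (hSR * complex_of_real pS + hRR * complex_of_real (sqrt \<zeta>) * complex_of_real pR
                + complex_of_real (\<sigma>R / sqrt 2) * (1 + \<i>))
              * complex_of_real (G_k hSR hRR \<zeta> \<sigma>R pS pR) * hRP * complex_of_real pR
      in (cmod A - cmod B)^2)"

definition C_breve :: "complex \<Rightarrow> complex \<Rightarrow> complex \<Rightarrow> real \<Rightarrow> real \<Rightarrow> real \<Rightarrow> real \<Rightarrow> real" where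
  "C_breve hSR hRD hRR \<zeta> \<sigma>D pS pR =
     (let \<zeta>h = (cmod hRR)^2 * \<zeta>;
          x = pR^2 * (cmod hRD)^2 / \<sigma>D^2;
          y = pS^2 * (cmod hSR)^2 / (\<zeta>h * pR^2)
      in x * y / (1 + x + y))"

text \<open>Feasible set of Problem 4 (restricted to the domain pR > 0 of the objective).\<close>
definition feasible4 :: "complex \<Rightarrow> complex \<Rightarrow> complex \<Rightarrow> complex \<Rightarrow> real \<Rightarrow> real \<Rightarrow> real \<Rightarrow> real \<Rightarrow> real \<Rightarrow> (real \<times> real) set" where
  "feasible4 hSR hRR hSP hRP \<zeta> \<sigma>R IP PSmax PRmax =
     {(pS, pR). 0 < pR \<and> I_coh hSR hRR hSP hRP \<zeta> \<sigma>R pS pR \<le> IP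
        \<and> 0 \<le> pS \<and> pS \<le> sqrt PSmax \<and> 0 \<le> pR \<and> pR \<le> sqrt PRmax}"

definition convex_max_problem :: "('a::real_vector) set \<Rightarrow> ('a \<Rightarrow> real) \<Rightarrow> bool" where
  "convex_max_problem F f \<longleftrightarrow> convex F \<and> concave_on F f"

end

theory Submission
  imports Defs
begin

lemma Icoh_cont:
  assumes "\<sigma>R > 0"
  shows "((\<lambda>t. I_coh hSR hRR hSP hRP \<zeta> \<sigma>R (c*t) t) \<longlongrightarrow> 0) (at_right 0)"
proof -
  let ?F = "\<lambda>t. I_coh hSR hRR hSP hRP \<zeta> \<sigma>R (c*t) t"
  have ic: "isCont ?F 0"
    unfolding I_coh_def G_k_def Let_def
    apply (intro continuous_intros)
    using assms apply auto
    done
  have z: "?F 0 = 0"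
    by (simp add: I_coh_def Let_def)
  have "(?F \<longlongrightarrow> ?F 0) (at 0)" using ic by (rule isContD)
  then have "(?F \<longlongrightarrow> 0) (at 0)" unfolding z .
  then show ?thesis by (rule tendsto_mono[OF at_le, rotated]) simp
qed

theorem lemma4:
  fixes hSR hRD hSP hRP hRR :: complex
    and \<sigma>D \<sigma>R \<zeta> IP PSmax PRmax :: real
  assumes "\<sigma>D > 0" "\<sigma>R > 0" "\<zeta> \<ge> 0" "(cmod hRR)^2 * \<zeta> > 0"
    and "IP > 0" "PSmax > 0" "PRmax > 0"
    and "hSR \<noteq> 0" "hRD \<noteq> 0"
  shows "\<not> convex_max_problem (feasible4 hSR hRR hSP hRP \<zeta> \<sigma>R IP PSmax PRmax)
            (\<lambda>(pS, pR). C_breve hSR hRD hRR \<zeta> \<sigma>D pS pR)"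
proof
  assume cvx: "convex_max_problem (feasible4 hSR hRR hSP hRP \<zeta> \<sigma>R IP PSmax PRmax)
            (\<lambda>(pS, pR). C_breve hSR hRD hRR \<zeta> \<sigma>D pS pR)"
  define b where "b = (cmod hSR)^2 / ((cmod hRR)^2 * \<zeta>)"
  have bpos: "b > 0" using assms(4,8) unfolding b_def by (simp add: zero_less_power2)
  define c where "c = 1 / (b + 1)"
  have cpos: "c > 0" and cle: "c \<le> 1" using bpos unfolding c_def by (auto simp: field_simps)
  have cb: "c^2 * b < 2"
  proof -
    have "c^2 * b = b / (b+1)^2" by (simp add: c_def power2_eq_square)
    also have "\<dots> < 2"
    proof -
      have "b < 2 * (b+1)^2" using bpos by (simp add: power2_eq_square algebra_simps add_pos_pos)
      then show ?thesis using bpos by (simp add: divide_less_eq)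
    qed
    finally show ?thesis .
  qed
  let ?I0 = "\<lambda>t. I_coh hSR hRR hSP hRP \<zeta> \<sigma>R (0*t) t"
  let ?I1 = "\<lambda>t. I_coh hSR hRR hSP hRP \<zeta> \<sigma>R (c*t) t"
  have e0: "eventually (\<lambda>t. ?I0 t < IP) (at_right 0)"
    using order_tendstoD(2)[OF Icoh_cont[OF assms(2)] assms(5)] .
  have e1: "eventually (\<lambda>t. ?I1 t < IP) (at_right 0)"
    using order_tendstoD(2)[OF Icoh_cont[OF assms(2)] assms(5)] .
  have e2: "eventually (\<lambda>t. t < min (sqrt PSmax) (sqrt PRmax)) (at_right (0::real))"
    using assms(6,7) by (intro order_tendstoD(2)[OF tendsto_ident_at]) auto
  have "eventually (\<lambda>t. ?I0 t < IP \<and> ?I1 t < IP \<and> t < min (sqrt PSmax) (sqrt PRmax)) (at_right (0::real))"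
    using e0 e1 e2 by (intro eventually_conj)
  then obtain bb where bb: "bb > (0::real)" and
    hb: "\<And>y. y > 0 \<Longrightarrow> y < bb \<Longrightarrow> ?I0 y < IP \<and> ?I1 y < IP \<and> y < min (sqrt PSmax) (sqrt PRmax)"
    unfolding eventually_at_right_field by auto
  define t where "t = bb / 2"
  have tpos: "t > 0" and tb: "t < bb" using bb t_def by auto
  note ht = hb[OF tpos tb]
  have ct: "c * t \<le> t" using cle tpos by (simp add: mult_le_cancel_right1)
  let ?F = "feasible4 hSR hRR hSP hRP \<zeta> \<sigma>R IP PSmax PRmax"
  let ?f = "\<lambda>(pS, pR). C_breve hSR hRD hRR \<zeta> \<sigma>D pS pR"
  have p0: "(0, t) \<in> ?F"
    using ht tpos assms(6,7) unfolding feasible4_def by auto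
  have cts: "c*t \<le> sqrt PSmax" using ct ht by linarith
  have p1: "(c*t, t) \<in> ?F"
    using ht tpos cpos cts assms(6,7) unfolding feasible4_def by auto
  have conc: "concave_on ?F ?f" using cvx unfolding convex_max_problem_def by simp
  have "?f ((1/2) *\<^sub>R (0, t) + (1/2) *\<^sub>R (c*t, t)) \<ge> (1/2) * ?f (0, t) + (1/2) * ?f (c*t, t)"
  proof -
    have "\<forall>x\<in>?F. \<forall>y\<in>?F. \<forall>u\<ge>0. \<forall>v\<ge>0. u + v = 1 \<longrightarrow> ?f (u *\<^sub>R x + v *\<^sub>R y) \<ge> u * ?f x + v * ?f y"
      using conc unfolding concave_on_iff by blast
    then show ?thesis using p0 p1 by (metis field_sum_of_halves zero_le_divide_iff zero_le_one zero_le_numeral)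
  qed
  note hh = this
  have ineq: "C_breve hSR hRD hRR \<zeta> \<sigma>D (c*t/2) t \<ge> (1/2) * C_breve hSR hRD hRR \<zeta> \<sigma>D (c*t) t"
  proof -
    have m: "(1/2) *\<^sub>R (0, t) + (1/2) *\<^sub>R (c*t, t) = (c*t/2, t)" by simp
    have z: "C_breve hSR hRD hRR \<zeta> \<sigma>D 0 t = 0" by (simp add: C_breve_def Let_def)
    show ?thesis using hh unfolding m by (simp add: z)
  qed
  define x where "x = t^2 * (cmod hRD)^2 / \<sigma>D^2"
  define y where "y = c^2 * b"
  have xpos: "x > 0" using tpos assms(1,9) unfolding x_def by simp
  have ypos: "y > 0" and y2: "y < 2" using cpos bpos cb unfolding y_def by auto
  have v1: "C_breve hSR hRD hRR \<zeta> \<sigma>D (c*t) t = x * y / (1 + x + y)"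
    using tpos unfolding C_breve_def Let_def x_def y_def b_def
    by (simp add: power_mult_distrib)
  have v2: "C_breve hSR hRD hRR \<zeta> \<sigma>D (c*t/2) t = x * (y/4) / (1 + x + y/4)"
    using tpos unfolding C_breve_def Let_def x_def y_def b_def
    by (simp add: power_mult_distrib power_divide)
  have "x * (y/4) / (1 + x + y/4) < (1/2) * (x * y / (1 + x + y))"
  proof -
    have a: "(x*y) * y < (x*y) * 2" using xpos ypos y2 by simp
    have b: "0 < x * (x * (y * 2))" using xpos ypos by simp
    have "x * (y * y) < x * (y * 2) + x * (x * (y * 2))" using a b by (simp add: algebra_simps)
    then show ?thesis using xpos ypos y2 by (simp add: field_simps)
  qed
  with ineq v1 v2 show False by simp
qed

end
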